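(* Let $\Lambda,\mu,\beta,\rho,\phi,\alpha,\omega>0$, $0<\eta_C\le 1$, $\eta_A\ge 1$, and set $\beta_1=\beta\mu/\Lambda$, $\xi_1=\alpha+\mu$, $\xi_2=\omega+\mu$, $\xi_3=\rho+\phi+\mu$. Consider the system \begin{align*} \dot S&=\Lambda-\beta_1(I+\eta_C C+\eta_A A)S-\mu S,\\ \dot I&=\beta_1(I+\eta_C C+\eta_A A)S-\xi_3 I+\alpha A+\omega C,\\ \dot C&=\phi I-\xi_2 C,\\ \dot A&=\rho I-\xi_1 A, \end{align*} on the region $\Omega=\{(S,I,C,A)\in\mathbb{R}_+^4: S+I+C+A\le \Lambda/\mu\}$, and let $\Omega_0=\{(S,I,C,A)\in\Omega: I=C=A=0\}$. Define $$\tilde R_0=\frac{\beta\,\bigl(\xi_2(\xi_1+\rho\eta_A)+\eta_C\phi\xi_1\bigr)}{\mu\,\bigl(\xi_2(\rho+\xi_1)+\phi\xi_1\bigr)}.$$ If $\tilde R_0>1$, then the endemic equilibrium $\tilde\Sigma_+=(S^*,I^*,C^*,A^* )$ of this system, given by $$S^*=\frac{\Lambda}{\mu\tilde R_0},\quad I^*=\frac{\Lambda\xi_1\xi_2(1-1/\tilde R_0)}{\mathcal D},\quad C^*=\frac{\Lambda\phi\xi_1(1-1/\tilde R_0)}{\mathcal D},\quad A^*=\frac{\Lambda\rho\xi_2(1-1/\tilde R_0)}{\mathcal D},$$ with $\mathcal D=\mu(\xi_2(\rho+\xi_1)+\phi\xi_1)$, is globally asymptotically stable in $\Omega\setminus\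Omega_0$.
   Context: This is the limiting (mass-action) form of an HIV/AIDS model with susceptible ($S$), pre-AIDS HIV-infected ($I$), HIV-infected under antiretroviral treatment ($C$) and AIDS ($A$) classes, with zero AIDS-induced death rate and total population fixed at $\Lambda/\mu$. $\tilde R_0$ is the basic reproduction number of this model; $\tilde\Sigma_+$ is its unique equilibrium with $I,C,A>0$ when $\tilde R_0>1$. *)

theory Defs
  imports "HOL-Analysis.Analysis"
begin

type_synonym state = "real \<times> real \<times> real \<times> real"  (* (S, I, C, A) *)

definition hiv_field ::
  "real \<Rightarrow> real \<Rightarrow> real \<Rightarrow> real \<Rightarrow> real \<Rightarrow> real \<Rightarrow> real \<Rightarrow> real \<Rightarrow> real \<Rightarrow> state \<Rightarrow> state" where
  "hiv_field \<Lambda> \<mu> \<beta> \<rho> \<phi> \<alpha> \<omega> \<eta>C \<eta>A = (\<lambda>(S, I, C, A).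
     let \<beta>1 = \<beta> * \<mu> / \<Lambda>; \<xi>1 = \<alpha> + \<mu>; \<xi>2 = \<omega> + \<mu>; \<xi>3 = \<rho> + \<phi> + \<mu> in
     (\<Lambda> - \<beta>1 * (I + \<eta>C * C + \<eta>A * A) * S - \<mu> * S,
      \<beta>1 * (I + \<eta>C * C + \<eta>A * A) * S - \<xi>3 * I + \<alpha> * A + \<omega> * C,
      \<phi> * I - \<xi>2 * C,
      \<rho> * I - \<xi>1 * A))"

definition Omega :: "real \<Rightarrow> real \<Rightarrow> state set" where
  "Omega \<Lambda> \<mu> = {(S, I, C, A). 0 \<le> S \<and> 0 \<le> I \<and> 0 \<le> C \<and> 0 \<le> A \<and> S + I + C + A \<le> \<Lambda> / \<mu>}"

definition Omega0 :: "real \<Rightarrow> real \<Rightarrow> state set" where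
  "Omega0 \<Lambda> \<mu> = {(S, I, C, A). (S, I, C, A) \<in> Omega \<Lambda> \<mu> \<and> I = 0 \<and> C = 0 \<and> A = 0}"

definition R0t ::
  "real \<Rightarrow> real \<Rightarrow> real \<Rightarrow> real \<Rightarrow> real \<Rightarrow> real \<Rightarrow> real \<Rightarrow> real \<Rightarrow> real \<Rightarrow> real" where
  "R0t \<Lambda> \<mu> \<beta> \<rho> \<phi> \<alpha> \<omega> \<eta>C \<eta>A =
     (let \<xi>1 = \<alpha> + \<mu>; \<xi>2 = \<omega> + \<mu> in
      \<beta> * (\<xi>2 * (\<xi>1 + \<rho> * \<eta>A) + \<eta>C * \<phi> * \<xi>1) / (\<mu> * (\<xi>2 * (\<rho> + \<xi>1) + \<phi> * \<xi>1)))"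

definition endemic_eq ::
  "real \<Rightarrow> real \<Rightarrow> real \<Rightarrow> real \<Rightarrow> real \<Rightarrow> real \<Rightarrow> real \<Rightarrow> real \<Rightarrow> real \<Rightarrow> state" where
  "endemic_eq \<Lambda> \<mu> \<beta> \<rho> \<phi> \<alpha> \<omega> \<eta>C \<eta>A =
     (let R = R0t \<Lambda> \<mu> \<beta> \<rho> \<phi> \<alpha> \<omega> \<eta>C \<eta>A; \<xi>1 = \<alpha> + \<mu>; \<xi>2 = \<omega> + \<mu>;
          D = \<mu> * (\<xi>2 * (\<rho> + \<xi>1) + \<phi> * \<xi>1) in
      (\<Lambda> / (\<mu> * R),
       \<Lambda> * \<xi>1 * \<xi>2 * (1 - 1 / R) / D,
       \<Lambda> * \<phi> * \<xi>1 * (1 - 1 / R) / D,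
       \<Lambda> * \<rho> * \<xi>2 * (1 - 1 / R) / D))"

definition is_solution :: "(state \<Rightarrow> state) \<Rightarrow> (real \<Rightarrow> state) \<Rightarrow> bool" where
  "is_solution F x \<longleftrightarrow> (\<forall>t\<ge>0. (x has_vector_derivative F (x t)) (at t within {0..}))"

definition globally_asymptotically_stable ::
  "(state \<Rightarrow> state) \<Rightarrow> state \<Rightarrow> state set \<Rightarrow> bool" where
  "globally_asymptotically_stable F E D \<longleftrightarrow>
     (\<forall>\<epsilon>>0. \<exists>\<delta>>0. \<forall>x. is_solution F x \<and> x 0 \<in> D \<and> dist (x 0) E < \<delta> \<longrightarrow>
                         (\<forall>t\<ge>0. dist (x t) E < \<epsilon>)) \<and>
     (\<forall>x. is_solution F x \<and> x 0 \<in> D \<longrightarrow> (x \<longlongrightarrow> E) at_top)"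

end

theory Submission
  imports Defs
begin


lemma amgm3:
  fixes p q r :: real assumes "p>0" "q>0" "r>0" "p*q*r = 1" shows "p+q+r \<ge> 3"
proof -
  have "ln (p*q*r) = ln p + ln q + ln r" using assms ln_mult[of "p*q" r] ln_mult[of p q] by simp
  then have "ln p + ln q + ln r = 0" using assms by simp
  moreover have "ln p \<le> p - 1" "ln q \<le> q - 1" "ln r \<le> r - 1" using assms by (auto intro: ln_le_minus_one)
  ultimately show ?thesis by linarith
qed

lemma amgm_term:
  fixes x y z :: real assumes "x>0" "y>0" "z>0"
  shows "3 - 1/x - x*z/y - y/z \<le> 0"
proof -
  have "1/x + x*z/y + y/z \<ge> 3" by (rule amgm3) (use assms in \<open>auto simp: field_simps\<close>)
  then show ?thesis by linarith
qed

locale hiv =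
  fixes \<Lambda> \<mu> \<beta> \<rho> \<phi> \<alpha> \<omega> \<eta>C \<eta>A :: real
  assumes pos: "\<Lambda> > 0" "\<mu> > 0" "\<beta> > 0" "\<rho> > 0" "\<phi> > 0" "\<alpha> > 0" "\<omega> > 0" "0 < \<eta>C" "\<eta>A \<ge> 1"
    and R1: "R0t \<Lambda> \<mu> \<beta> \<rho> \<phi> \<alpha> \<omega> \<eta>C \<eta>A > 1"
begin

definition "b1 = \<beta> * \<mu> / \<Lambda>"
definition "xi1 = \<alpha> + \<mu>"
definition "xi2 = \<omega> + \<mu>"
definition "xi3 = \<rho> + \<phi> + \<mu>"
definition "Ss = fst (endemic_eq \<Lambda> \<mu> \<beta> \<rho> \<phi> \<alpha> \<omega> \<eta>C \<eta>A)"
definition "Is = fst (snd (endemic_eq \<Lambda> \<mu> \<beta> \<rho> \<phi> \<alpha> \<omega> \<eta>C \<eta>A))"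
definition "Cs = fst (snd (snd (endemic_eq \<Lambda> \<mu> \<beta> \<rho> \<phi> \<alpha> \<omega> \<eta>C \<eta>A)))"
definition "As = snd (snd (snd (endemic_eq \<Lambda> \<mu> \<beta> \<rho> \<phi> \<alpha> \<omega> \<eta>C \<eta>A)))"
definition "Fs = Is + \<eta>C*Cs + \<eta>A*As"

lemma E_eq: "endemic_eq \<Lambda> \<mu> \<beta> \<rho> \<phi> \<alpha> \<omega> \<eta>C \<eta>A = (Ss, Is, Cs, As)"
  by (simp add: Ss_def Is_def Cs_def As_def)

lemma xi_pos: "xi1 > 0" "xi2 > 0" "xi3 > 0" "b1 > 0"
  using pos by (auto simp: xi1_def xi2_def xi3_def b1_def)

lemma eq_facts:
  shows "Ss > 0" "Is > 0" "Cs > 0" "As > 0"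
    and "\<Lambda> = b1*Ss*Fs + \<mu>*Ss"
    and "xi3*Is = b1*Ss*Fs + \<alpha>*As + \<omega>*Cs"
    and "\<phi>*Is = xi2*Cs" and "\<rho>*Is = xi1*As"
    and "\<Lambda> = \<mu>*(Ss+Is+Cs+As)"
proof -
  define R where "R = R0t \<Lambda> \<mu> \<beta> \<rho> \<phi> \<alpha> \<omega> \<eta>C \<eta>A"
  define Num where "Num = xi2 * (xi1 + \<rho> * \<eta>A) + \<eta>C * \<phi> * xi1"
  define Den where "Den = xi2 * (\<rho> + xi1) + \<phi> * xi1"
  define k where "k = \<Lambda> * (1 - 1/R) / (\<mu> * Den)"
  have R: "R = \<beta> * Num / (\<mu> * Den)" unfolding R_def R0t_def Num_def Den_def xi1_def xi2_def Let_def by simp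
  have R1': "R > 1" using R1 R_def by simp
  have NumP: "Num > 0" unfolding Num_def using pos xi_pos by (simp add: add_pos_pos)
  have DenP: "Den > 0" unfolding Den_def using pos xi_pos by (simp add: add_pos_pos)
  have kP: "k > 0" unfolding k_def using pos DenP R1' by (simp add: field_simps)
  have S: "Ss = \<Lambda>/(\<mu>*R)" and I: "Is = k*xi1*xi2" and C: "Cs = k*\<phi>*xi1" and A: "As = k*\<rho>*xi2"
    unfolding Ss_def Is_def Cs_def As_def endemic_eq_def k_def Den_def R_def xi1_def xi2_def Let_def
    using R1 by (simp_all add: field_simps)
  show "Ss > 0" "Is > 0" "Cs > 0" "As > 0" using S I C A kP pos xi_pos R1' by auto
  have F: "Fs = k*Num" unfolding Fs_def I C A Num_def by (simp add: algebra_simps)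
  have bS: "b1*Ss = \<mu>*Den/Num" unfolding S b1_def R using pos NumP DenP by (simp add: field_simps)
  have bSF: "b1*Ss*Fs = \<Lambda>*(1-1/R)" unfolding bS F k_def using pos NumP DenP by (simp add: field_simps)
  have muS: "\<mu>*Ss = \<Lambda>/R" unfolding S using pos by simp
  show "\<Lambda> = b1*Ss*Fs + \<mu>*Ss" unfolding bSF muS using pos R1' by (simp add: field_simps)
  have bSF': "b1*Ss*Fs = \<mu>*Den*k" unfolding bS F using NumP DenP pos by (simp add: field_simps)
  have kD: "\<mu>*Den*k = \<Lambda>*(1-1/R)" unfolding k_def using DenP pos by (simp add: field_simps)
  show "xi3*Is = b1*Ss*Fs + \<alpha>*As + \<omega>*Cs" unfolding bSF' I A C xi3_def Den_def xi1_def xi2_def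
    by (simp add: algebra_simps)
  show "\<phi>*Is = xi2*Cs" "\<rho>*Is = xi1*As" unfolding I C A by (simp_all add: algebra_simps)
  have "Is+Cs+As = k*Den" unfolding I C A Den_def by (simp add: algebra_simps)
  then have "\<mu>*(Ss+Is+Cs+As) = \<mu>*Ss + \<mu>*Den*k" by (metis distrib_left mult.commute mult.left_commute add.assoc)
  then show "\<Lambda> = \<mu>*(Ss+Is+Cs+As)" unfolding kD muS using R1' by (simp add: field_simps)
qed

end

lemma FS_bound:
  fixes F S d K G :: real
  assumes "d > 0" "F \<ge> -G*d" "\<bar>F\<bar> \<le> G*K" "S \<ge> -d" "\<bar>S\<bar> \<le> K" "G \<ge> 0"
  shows "F*S \<ge> -G*K*d"
proof (cases "S \<ge> 0")
  case True
  have 1: "F*S \<ge> (-G*d)*S" using True assms by (intro mult_right_mono) auto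
  have "S \<le> K" using True assms by linarith
  then have "G*d*S \<le> G*d*K" using assms by (intro mult_left_mono) auto
  then show ?thesis using 1 by (simp add: algebra_simps)
next
  case False
  then have Sd: "\<bar>S\<bar> \<le> d" using assms by linarith
  have "\<bar>F\<bar>*\<bar>S\<bar> \<le> (G*K)*d" using assms Sd
    by (intro mult_mono) auto
  then have "\<bar>F*S\<bar> \<le> G*K*d" by (simp add: abs_mult)
  moreover have "-(F*S) \<le> \<bar>F*S\<bar>" by (rule abs_ge_minus_self)
  ultimately show ?thesis by linarith
qed

lemma first_zero_contra:
  fixes q :: "real \<Rightarrow> real"
  assumes "(q has_real_derivative l) (at t2)" "l > 0" "q t2 \<le> 0" "t2 > 0"
    "\<And>t. 0 < t \<Longrightarrow> t < t2 \<Longrightarrow> q t > 0"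
  shows False
proof -
  obtain d where d: "d > 0" "\<And>h. h > 0 \<Longrightarrow> h < d \<Longrightarrow> q (t2 - h) < q t2"
    using DERIV_pos_inc_left[OF assms(1,2)] by blast
  define h where "h = min (d/2) (t2/2)"
  have "q (t2 - h) < q t2" using d assms(4) unfolding h_def by (intro d(2)) auto
  moreover have "q (t2 - h) > 0" using d assms(4) unfolding h_def by (intro assms(5)) auto
  ultimately show False using assms(3) by linarith
qed



lemma exp_weight_mono:
  fixes y y' :: "real \<Rightarrow> real" and k t1 t2 :: real
  assumes der: "\<And>u. u > 0 \<Longrightarrow> (y has_real_derivative y' u) (at u)"
    and cont: "continuous_on {0..} y"
    and sgn: "\<And>u. t1 < u \<Longrightarrow> u < t2 \<Longrightarrow> y' u + k * y u \<ge> 0"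
    and t: "0 \<le> t1" "t1 \<le> t2"
  shows "y t1 * exp (k*t1) \<le> y t2 * exp (k*t2)"
proof (rule DERIV_nonneg_imp_increasing_open[OF t(2)])
  fix u assume u: "t1 < u" "u < t2"
  have "((\<lambda>u. y u * exp (k*u)) has_real_derivative (y' u * exp (k*u) + y u * (exp (k*u) * k))) (at u)"
    using u t by (auto intro!: derivative_eq_intros der)
  moreover have "y' u * exp (k*u) + y u * (exp (k*u) * k) = (y' u + k * y u) * exp (k*u)"
    by (simp add: algebra_simps)
  moreover have "(y' u + k * y u) * exp (k*u) \<ge> 0" using sgn[OF u] by simp
  ultimately show "\<exists>z. ((\<lambda>u. y u * exp (k*u)) has_real_derivative z) (at u) \<and> z \<ge> 0" by auto
next
  show "continuous_on {t1..t2} (\<lambda>u. y u * exp (k*u))"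
    using t by (intro continuous_intros continuous_on_subset[OF cont]) auto
qed

lemma exp_weight_strict:
  fixes y y' :: "real \<Rightarrow> real" and k t1 t2 :: real
  assumes der: "\<And>u. u > 0 \<Longrightarrow> (y has_real_derivative y' u) (at u)"
    and cont: "continuous_on {0..} y"
    and sgn: "\<And>u. t1 < u \<Longrightarrow> u < t2 \<Longrightarrow> y' u + k * y u > 0"
    and t: "0 \<le> t1" "t1 < t2"
  shows "y t1 * exp (k*t1) < y t2 * exp (k*t2)"
proof (rule DERIV_pos_imp_increasing_open[OF t(2)])
  fix u assume u: "t1 < u" "u < t2"
  have "((\<lambda>u. y u * exp (k*u)) has_real_derivative (y' u * exp (k*u) + y u * (exp (k*u) * k))) (at u)"
    using u t by (auto intro!: derivative_eq_intros der)
  moreover have "y' u * exp (k*u) + y u * (exp (k*u) * k) = (y' u + k * y u) * exp (k*u)"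
    by (simp add: algebra_simps)
  moreover have "(y' u + k * y u) * exp (k*u) > 0" using sgn[OF u] by simp
  ultimately show "\<exists>z. ((\<lambda>u. y u * exp (k*u)) has_real_derivative z) (at u) \<and> z > 0" by auto
next
  show "continuous_on {t1..t2} (\<lambda>u. y u * exp (k*u))"
    using t by (intro continuous_intros continuous_on_subset[OF cont]) auto
qed

lemma volterra_ident:
  fixes S I C A Ss Is Cs As b1 eC eA al om mu phi rho xi1 xi2 xi3 Lam Fs :: real
  assumes pos: "S>0" "I>0" "C>0" "A>0" "Ss>0" "Is>0" "Cs>0" "As>0" "xi1>0" "xi2>0"
    and Fs: "Fs = Is + eC*Cs + eA*As"
    and E1: "Lam = b1*Ss*Fs + mu*Ss"
    and E2: "xi3*Is = b1*Ss*Fs + al*As + om*Cs"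
    and E3: "phi*Is = xi2*Cs" and E4: "rho*Is = xi1*As"
  shows "(1 - Ss/S)*(Lam - b1*(I + eC*C + eA*A)*S - mu*S)
       + (1 - Is/I)*(b1*(I + eC*C + eA*A)*S - xi3*I + al*A + om*C)
       + ((b1*Ss*eC + om)/xi2)*(1 - Cs/C)*(phi*I - xi2*C)
       + ((b1*Ss*eA + al)/xi1)*(1 - As/A)*(rho*I - xi1*A)
     = - mu*(S-Ss)^2/S - b1*Ss*Is*(1 - S/Ss)^2/(S/Ss)
       + b1*Ss*eC*Cs*(3 - Ss/S - (S/Ss)*(C/Cs)/(I/Is) - (I/Is)/(C/Cs))
       + om*Cs*(2 - (C/Cs)/(I/Is) - (I/Is)/(C/Cs))
       + b1*Ss*eA*As*(3 - Ss/S - (S/Ss)*(A/As)/(I/Is) - (I/Is)/(A/As))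
       + al*As*(2 - (A/As)/(I/Is) - (I/Is)/(A/As))"
proof -
  have phi: "phi = xi2*Cs/Is" using E3 pos by (simp add: field_simps)
  have rho: "rho = xi1*As/Is" using E4 pos by (simp add: field_simps)
  have xi3: "xi3 = (b1*Ss*Fs + al*As + om*Cs)/Is" using E2 pos by (simp add: field_simps)
  show ?thesis unfolding phi rho xi3 E1 Fs using pos
    by (simp add: field_simps) (simp add: algebra_simps power2_eq_square)
qed

locale hiv_sol = hiv +
  fixes s i c a :: "real \<Rightarrow> real"
  assumes sol: "is_solution (hiv_field \<Lambda> \<mu> \<beta> \<rho> \<phi> \<alpha> \<omega> \<eta>C \<eta>A) (\<lambda>t. (s t, i t, c t, a t))"
    and init: "(s 0, i 0, c 0, a 0) \<in> Omega \<Lambda> \<mu>"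
begin

definition "F t = i t + \<eta>C * c t + \<eta>A * a t"

lemma field_eq: "hiv_field \<Lambda> \<mu> \<beta> \<rho> \<phi> \<alpha> \<omega> \<eta>C \<eta>A (s t, i t, c t, a t) =
   (\<Lambda> - b1*F t * s t - \<mu>* s t, b1*F t * s t - xi3*i t + \<alpha>*a t + \<omega>*c t,
    \<phi>*i t - xi2*c t, \<rho>*i t - xi1*a t)"
  unfolding hiv_field_def F_def b1_def xi1_def xi2_def xi3_def Let_def by simp

lemma init_nonneg: "s 0 \<ge> 0" "i 0 \<ge> 0" "c 0 \<ge> 0" "a 0 \<ge> 0" "s 0 + i 0 + c 0 + a 0 \<le> \<Lambda>/\<mu>"
proof -
  show "s 0 \<ge> 0" "i 0 \<ge> 0" "c 0 \<ge> 0" "a 0 \<ge> 0" "s 0 + i 0 + c 0 + a 0 \<le> \<Lambda>/\<mu>"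
    using init unfolding Omega_def by simp_all
qed

lemma derivs:
  assumes "t \<ge> 0"
  shows "(s has_real_derivative (\<Lambda> - b1*F t* s t - \<mu>* s t)) (at t within {0..})"
    and "(i has_real_derivative (b1*F t* s t - xi3*i t + \<alpha>*a t + \<omega>*c t)) (at t within {0..})"
    and "(c has_real_derivative (\<phi>*i t - xi2*c t)) (at t within {0..})"
    and "(a has_real_derivative (\<rho>*i t - xi1*a t)) (at t within {0..})"
proof -
  have d: "((\<lambda>t. (s t, i t, c t, a t)) has_vector_derivative (\<Lambda> - b1*F t* s t - \<mu>* s t, b1*F t* s t - xi3*i t + \<alpha>*a t + \<omega>*c t,
    \<phi>*i t - xi2*c t, \<rho>*i t - xi1*a t)) (at t within {0..})"
    using sol assms unfolding is_solution_def field_eq by auto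
  note fd = bounded_linear.has_vector_derivative[OF bounded_linear_fst]
  note sd = bounded_linear.has_vector_derivative[OF bounded_linear_snd]
  have d1: "((\<lambda>t. (i t, c t, a t)) has_vector_derivative (b1*F t* s t - xi3*i t + \<alpha>*a t + \<omega>*c t,
    \<phi>*i t - xi2*c t, \<rho>*i t - xi1*a t)) (at t within {0..})" using sd[OF d] by simp
  have d2: "((\<lambda>t. (c t, a t)) has_vector_derivative (\<phi>*i t - xi2*c t, \<rho>*i t - xi1*a t)) (at t within {0..})"
    using sd[OF d1] by simp
  show "(s has_real_derivative (\<Lambda> - b1*F t* s t - \<mu>* s t)) (at t within {0..})"
    using fd[OF d] unfolding has_real_derivative_iff_has_vector_derivative by simp
  show "(i has_real_derivative (b1*F t* s t - xi3*i t + \<alpha>*a t + \<omega>*c t)) (at t within {0..})"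
    using fd[OF d1] unfolding has_real_derivative_iff_has_vector_derivative by simp
  show "(c has_real_derivative (\<phi>*i t - xi2*c t)) (at t within {0..})"
    using fd[OF d2] unfolding has_real_derivative_iff_has_vector_derivative by simp
  show "(a has_real_derivative (\<rho>*i t - xi1*a t)) (at t within {0..})"
    using sd[OF d2] unfolding has_real_derivative_iff_has_vector_derivative by simp
qed

lemma derivs_at:
  assumes "t > 0"
  shows "(s has_real_derivative (\<Lambda> - b1*F t* s t - \<mu>* s t)) (at t)"
    and "(i has_real_derivative (b1*F t* s t - xi3*i t + \<alpha>*a t + \<omega>*c t)) (at t)"
    and "(c has_real_derivative (\<phi>*i t - xi2*c t)) (at t)"
    and "(a has_real_derivative (\<rho>*i t - xi1*a t)) (at t)"
proof -
  have "at t within {0..} = at t" using assms by (intro at_within_interior) auto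
  then show "(s has_real_derivative (\<Lambda> - b1*F t* s t - \<mu>* s t)) (at t)"
    and "(i has_real_derivative (b1*F t* s t - xi3*i t + \<alpha>*a t + \<omega>*c t)) (at t)"
    and "(c has_real_derivative (\<phi>*i t - xi2*c t)) (at t)"
    and "(a has_real_derivative (\<rho>*i t - xi1*a t)) (at t)"
    using derivs[of t] assms by auto
qed

lemma x_cont: "continuous_on {0..} (\<lambda>t. (s t, i t, c t, a t))"
  using sol unfolding is_solution_def by (intro continuous_on_vector_derivative) auto

lemma comp_cont: "continuous_on {0..} s" "continuous_on {0..} i" "continuous_on {0..} c" "continuous_on {0..} a"
  using continuous_on_fst[OF x_cont] continuous_on_fst[OF continuous_on_snd[OF x_cont]]
    continuous_on_fst[OF continuous_on_snd[OF continuous_on_snd[OF x_cont]]]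
    continuous_on_snd[OF continuous_on_snd[OF continuous_on_snd[OF x_cont]]] by simp_all

lemma comp_cont_sub:
  assumes "S \<subseteq> {0..}"
  shows "continuous_on S s" "continuous_on S i" "continuous_on S c" "continuous_on S a"
  using comp_cont continuous_on_subset assms by blast+

lemma N_bound:
  assumes "t \<ge> 0"
  shows "s t + i t + c t + a t \<le> \<Lambda>/\<mu>"
proof -
  define f where "f u = (s u + i u + c u + a u - \<Lambda>/\<mu>) * exp (\<mu>*u)" for u
  have "f t \<le> f 0"
  proof (rule DERIV_nonpos_imp_decreasing_open[OF assms])
    fix u :: real assume u: "0 < u" "u < t"
    have "(f has_real_derivative
      ((\<Lambda> - b1*F u * s u - \<mu>* s u) + (b1*F u * s u - xi3*i u + \<alpha>*a u + \<omega>*c u)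
        + (\<phi>*i u - xi2*c u) + (\<rho>*i u - xi1*a u)) * exp (\<mu>*u)
       + (s u + i u + c u + a u - \<Lambda>/\<mu>) * (exp (\<mu>*u) * \<mu>)) (at u)"
      unfolding f_def[abs_def] using u
      by (auto intro!: derivative_eq_intros derivs_at)
    moreover have "((\<Lambda> - b1*F u * s u - \<mu>* s u) + (b1*F u * s u - xi3*i u + \<alpha>*a u + \<omega>*c u)
        + (\<phi>*i u - xi2*c u) + (\<rho>*i u - xi1*a u)) * exp (\<mu>*u)
       + (s u + i u + c u + a u - \<Lambda>/\<mu>) * (exp (\<mu>*u) * \<mu>) = 0"
      using pos unfolding xi1_def xi2_def xi3_def by (simp add: field_simps)
    ultimately show "\<exists>y. (f has_real_derivative y) (at u) \<and> y \<le> 0" by auto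
  next
    show "continuous_on {0..t} f" unfolding f_def[abs_def]
      by (intro continuous_intros comp_cont_sub) auto
  qed
  also have "f 0 \<le> 0" unfolding f_def using init_nonneg by simp
  finally have "(s t + i t + c t + a t - \<Lambda>/\<mu>) * exp (\<mu>*t) \<le> 0" unfolding f_def .
  then show ?thesis by (simp add: mult_le_0_iff)
qed

lemma left_limit_nonneg:
  fixes q :: "real \<Rightarrow> real"
  assumes "isCont q t2" "t2 > 0" "\<And>t. 0 < t \<Longrightarrow> t < t2 \<Longrightarrow> q t > 0"
  shows "q t2 \<ge> 0"
proof (rule tendsto_lowerbound)
  show "(q \<longlongrightarrow> q t2) (at_left t2)"
    using assms(1) continuous_at_imp_continuous_at_within continuous_within by blast
  show "\<forall>\<^sub>F t in at_left t2. 0 \<le> q t"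
    using eventually_at_left_real[OF assms(2)] by eventually_elim (use assms(3) in \<open>auto intro: less_imp_le\<close>)
qed simp

lemma nonneg:
  assumes T: "T \<ge> 0"
  shows "s T \<ge> 0 \<and> i T \<ge> 0 \<and> c T \<ge> 0 \<and> a T \<ge> 0"
proof -
  define f where "f t = \<bar>s t\<bar> + \<bar>i t\<bar> + \<bar>c t\<bar> + \<bar>a t\<bar>" for t
  have cont: "continuous_on {0..T} f" unfolding f_def[abs_def]
    by (intro continuous_intros comp_cont_sub) auto
  obtain tm where tm: "tm \<in> {0..T}" "\<forall>y\<in>{0..T}. f y \<le> f tm"
    using continuous_attains_sup[OF compact_Icc _ cont] T by auto
  define K where "K = f tm"
  have fK: "f t \<le> K" if "t \<in> {0..T}" for t using tm(2) that unfolding K_def by auto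
  have K: "\<bar>s t\<bar> \<le> K" "\<bar>i t\<bar> \<le> K" "\<bar>c t\<bar> \<le> K" "\<bar>a t\<bar> \<le> K" if "t \<in> {0..T}" for t
    using fK[OF that] abs_ge_zero[of "s t"] abs_ge_zero[of "i t"] abs_ge_zero[of "c t"] abs_ge_zero[of "a t"]
    unfolding f_def by linarith+
  have K0: "K \<ge> 0" using K[of 0] T by auto
  define G where "G = 1 + \<eta>C + \<eta>A"
  have G0: "G > 0" unfolding G_def using pos by auto
  define L where "L = b1*G*K + \<alpha> + \<omega> + \<phi> + \<rho> + 1"
  have FK: "\<bar>F t\<bar> \<le> G*K" if "t \<in> {0..T}" for t
  proof -
    have e1: "\<bar>\<eta>C * c t\<bar> = \<eta>C*\<bar>c t\<bar>" "\<bar>\<eta>A * a t\<bar> = \<eta>A*\<bar>a t\<bar>"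
      using pos by (simp_all add: abs_mult)
    have "\<bar>F t\<bar> \<le> \<bar>i t + \<eta>C * c t\<bar> + \<bar>\<eta>A * a t\<bar>" unfolding F_def by (rule abs_triangle_ineq)
    also have "\<dots> \<le> \<bar>i t\<bar> + \<bar>\<eta>C * c t\<bar> + \<bar>\<eta>A * a t\<bar>" using abs_triangle_ineq by simp
    finally have "\<bar>F t\<bar> \<le> \<bar>i t\<bar> + \<eta>C*\<bar>c t\<bar> + \<eta>A*\<bar>a t\<bar>" unfolding e1 .
    also have "\<dots> \<le> K + \<eta>C*K + \<eta>A*K" using K[OF that] pos
      by (intro add_mono mult_left_mono) auto
    finally show ?thesis unfolding G_def by (simp add: algebra_simps)
  qed
  have main: "\<forall>t\<in>{0..T}. s t + e*exp(L*t) > 0 \<and> i t + e*exp(L*t) > 0 \<and> c t + e*exp(L*t) > 0 \<and> a t + e*exp(L*t) > 0"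
    if e: "e > 0" for e
  proof (rule ccontr)
    define q1 where "q1 t = s t + e*exp(L*t)" for t
    define q2 where "q2 t = i t + e*exp(L*t)" for t
    define q3 where "q3 t = c t + e*exp(L*t)" for t
    define q4 where "q4 t = a t + e*exp(L*t)" for t
    define m where "m t = min (min (q1 t) (q2 t)) (min (q3 t) (q4 t))" for t
    assume "\<not> ?thesis"
    then obtain t0 where t0: "t0 \<in> {0..T}" "m t0 \<le> 0" unfolding m_def q1_def q2_def q3_def q4_def by force
    define Z where "Z = {0..T} \<inter> m -` {..0}"
    have mcont: "continuous_on {0..T} m" unfolding m_def[abs_def] q1_def q2_def q3_def q4_def
      by (intro continuous_intros comp_cont_sub) auto
    have Zcl: "closed Z" unfolding Z_def by (rule continuous_closed_preimage[OF mcont]) auto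
    have Zne: "Z \<noteq> {}" using t0 unfolding Z_def by auto
    have bdd: "bdd_below Z" unfolding Z_def by (auto intro: bdd_belowI[of _ 0])
    define t2 where "t2 = Inf Z"
    have t2Z: "t2 \<in> Z" unfolding t2_def using closed_contains_Inf[OF Zne bdd Zcl] .
    have t2T: "t2 \<in> {0..T}" and mt2: "m t2 \<le> 0" using t2Z unfolding Z_def by auto
    have below: "m t > 0" if "0 \<le> t" "t < t2" for t
    proof (rule ccontr)
      assume "\<not> m t > 0"
      then have "t \<in> Z" using that t2T unfolding Z_def by auto
      then have "t2 \<le> t" unfolding t2_def using bdd by (rule cInf_lower)
      then show False using that by simp
    qed
    have m0: "m 0 > 0" using init_nonneg e unfolding m_def q1_def q2_def q3_def q4_def by auto
    have t2pos: "t2 > 0" using t2T mt2 m0 by (cases "t2 = 0") auto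
    define d where "d = e*exp(L*t2)"
    have d0: "d > 0" unfolding d_def using e by simp
    have qpos: "q1 t > 0 \<and> q2 t > 0 \<and> q3 t > 0 \<and> q4 t > 0" if "0 < t" "t < t2" for t
      using below[of t] that unfolding m_def by auto
    have dq1: "(q1 has_real_derivative (\<Lambda> - b1*F t2 * s t2 - \<mu>* s t2) + e*(exp(L*t2)*L)) (at t2)"
      unfolding q1_def[abs_def] using t2pos by (auto intro!: derivative_eq_intros derivs_at)
    have dq2: "(q2 has_real_derivative (b1*F t2 * s t2 - xi3*i t2 + \<alpha>*a t2 + \<omega>*c t2) + e*(exp(L*t2)*L)) (at t2)"
      unfolding q2_def[abs_def] using t2pos by (auto intro!: derivative_eq_intros derivs_at)
    have dq3: "(q3 has_real_derivative (\<phi>*i t2 - xi2*c t2) + e*(exp(L*t2)*L)) (at t2)"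
      unfolding q3_def[abs_def] using t2pos by (auto intro!: derivative_eq_intros derivs_at)
    have dq4: "(q4 has_real_derivative (\<rho>*i t2 - xi1*a t2) + e*(exp(L*t2)*L)) (at t2)"
      unfolding q4_def[abs_def] using t2pos by (auto intro!: derivative_eq_intros derivs_at)
    have q1n: "q1 t2 \<ge> 0" using left_limit_nonneg[OF DERIV_isCont[OF dq1] t2pos] qpos by blast
    have q2n: "q2 t2 \<ge> 0" using left_limit_nonneg[OF DERIV_isCont[OF dq2] t2pos] qpos by blast
    have q3n: "q3 t2 \<ge> 0" using left_limit_nonneg[OF DERIV_isCont[OF dq3] t2pos] qpos by blast
    have q4n: "q4 t2 \<ge> 0" using left_limit_nonneg[OF DERIV_isCont[OF dq4] t2pos] qpos by blast
    have lb: "s t2 \<ge> -d" "i t2 \<ge> -d" "c t2 \<ge> -d" "a t2 \<ge> -d"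
      using q1n q2n q3n q4n unfolding q1_def q2_def q3_def q4_def d_def by auto
    have Kt: "\<bar>s t2\<bar> \<le> K" "\<bar>i t2\<bar> \<le> K" "\<bar>c t2\<bar> \<le> K" "\<bar>a t2\<bar> \<le> K" using K[OF t2T] by auto
    have Ft: "\<bar>F t2\<bar> \<le> G*K" using FK[OF t2T] .
    have eL: "e*(exp(L*t2)*L) = L*d" unfolding d_def by simp
    have pc: "\<eta>C * c t2 \<ge> \<eta>C * (-d)" "\<eta>A * a t2 \<ge> \<eta>A * (-d)"
      using mult_left_mono[OF lb(3), of \<eta>C] mult_left_mono[OF lb(4), of \<eta>A] pos by auto
    have pb: "b1 > 0" using xi_pos by simp
    have pd: "\<alpha>*d > 0" "\<omega>*d > 0" "\<phi>*d > 0" "\<rho>*d > 0" using pos d0 by simp_all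
    consider "q1 t2 \<le> 0" | "q2 t2 \<le> 0" | "q3 t2 \<le> 0" | "q4 t2 \<le> 0"
      using mt2 unfolding m_def by linarith
    then show False
    proof cases
      case 1
      then have sd: "s t2 = -d" using q1n unfolding q1_def d_def by simp
      have "F t2 \<ge> -(G*K)" using Ft by linarith
      then have "F t2 * d \<ge> -(G*K)*d" using d0 by (intro mult_right_mono) auto
      then have "b1 * (F t2 * d) \<ge> b1 * (-(G*K)*d)" using pb by (intro mult_left_mono) auto
      then have "(\<Lambda> - b1*F t2 * s t2 - \<mu>* s t2) + L*d > 0"
        unfolding sd L_def using pos d0 K0 G0 pb
        by (simp add: algebra_simps) (smt (verit) mult_pos_pos)
      then have "0 < (\<Lambda> - b1*F t2 * s t2 - \<mu>* s t2) + e*(exp(L*t2)*L)" unfolding eL .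
      then show False by (rule first_zero_contra[OF dq1 _ 1 t2pos]) (use qpos in blast)
    next
      case 2
      then have id: "i t2 = -d" using q2n unfolding q2_def d_def by simp
      have "F t2 \<ge> -G*d" unfolding F_def id G_def using pc by (simp add: algebra_simps)
      then have "F t2 * s t2 \<ge> -G*K*d" using FS_bound[OF d0 _ Ft lb(1) Kt(1)] G0 by auto
      then have "b1 * (F t2 * s t2) \<ge> b1 * (-G*K*d)" using pb by (intro mult_left_mono) auto
      moreover have "\<alpha> * a t2 \<ge> \<alpha> * (-d)" "\<omega> * c t2 \<ge> \<omega> * (-d)"
        using mult_left_mono[OF lb(4), of \<alpha>] mult_left_mono[OF lb(3), of \<omega>] pos by auto
      moreover have "xi3 * d > 0" using xi_pos d0 by simp
      ultimately have "(b1*F t2 * s t2 - xi3*i t2 + \<alpha>*a t2 + \<omega>*c t2) + L*d > 0"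
        unfolding id L_def using d0 by (simp add: algebra_simps) (use pd in linarith)
      then have "0 < (b1*F t2 * s t2 - xi3*i t2 + \<alpha>*a t2 + \<omega>*c t2) + e*(exp(L*t2)*L)" unfolding eL .
      then show False by (rule first_zero_contra[OF dq2 _ 2 t2pos]) (use qpos in blast)
    next
      case 3
      then have cd: "c t2 = -d" using q3n unfolding q3_def d_def by simp
      have "\<phi> * i t2 \<ge> \<phi> * (-d)" using mult_left_mono[OF lb(2), of \<phi>] pos by auto
      moreover have "xi2 * d > 0" "b1*G*K*d \<ge> 0" using xi_pos d0 pb G0 K0 by auto
      ultimately have "(\<phi>*i t2 - xi2*c t2) + L*d > 0"
        unfolding cd L_def using d0 pos by (simp add: algebra_simps) (use pd in linarith)
      then have "0 < (\<phi>*i t2 - xi2*c t2) + e*(exp(L*t2)*L)" unfolding eL .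
      then show False by (rule first_zero_contra[OF dq3 _ 3 t2pos]) (use qpos in blast)
    next
      case 4
      then have ad: "a t2 = -d" using q4n unfolding q4_def d_def by simp
      have "\<rho> * i t2 \<ge> \<rho> * (-d)" using mult_left_mono[OF lb(2), of \<rho>] pos by auto
      moreover have "xi1 * d > 0" "b1*G*K*d \<ge> 0" using xi_pos d0 pb G0 K0 by auto
      ultimately have "(\<rho>*i t2 - xi1*a t2) + L*d > 0"
        unfolding ad L_def using d0 pos by (simp add: algebra_simps) (use pd in linarith)
      then have "0 < (\<rho>*i t2 - xi1*a t2) + e*(exp(L*t2)*L)" unfolding eL .
      then show False by (rule first_zero_contra[OF dq4 _ 4 t2pos]) (use qpos in blast)
    qed
  qed
  have fin: "y \<ge> 0" if "\<And>e. e > 0 \<Longrightarrow> y + e*exp(L*T) > 0" for y :: real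
  proof (rule ccontr)
    assume "\<not> y \<ge> 0"
    then have "y + (-y/(2*exp(L*T)))*exp(L*T) > 0" by (intro that) (simp add: divide_less_0_iff)
    then show False using \<open>\<not> y \<ge> 0\<close> by simp
  qed
  show ?thesis using main T by (intro conjI fin) auto
qed

lemma F_bounds:
  assumes "t \<ge> 0"
  shows "F t \<ge> 0" "F t \<le> (1 + \<eta>C + \<eta>A) * (\<Lambda>/\<mu>)"
proof -
  have nn: "s t \<ge> 0" "i t \<ge> 0" "c t \<ge> 0" "a t \<ge> 0" using nonneg[OF assms] by auto
  show "F t \<ge> 0" unfolding F_def using nn pos by simp
  have N: "s t + i t + c t + a t \<le> \<Lambda>/\<mu>" using N_bound[OF assms] .
  have "\<eta>C * c t \<le> (1 + \<eta>C + \<eta>A) * c t" "\<eta>A * a t \<le> (1 + \<eta>C + \<eta>A) * a t"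
    using nn pos by (auto intro!: mult_right_mono)
  moreover have "1 * i t \<le> (1 + \<eta>C + \<eta>A) * i t"
    using nn pos by (intro mult_right_mono) auto
  ultimately have "F t \<le> (1 + \<eta>C + \<eta>A) * (i t + c t + a t)" unfolding F_def by (simp add: algebra_simps)
  also have "\<dots> \<le> (1 + \<eta>C + \<eta>A) * (\<Lambda>/\<mu>)" using N nn pos by (intro mult_left_mono) auto
  finally show "F t \<le> (1 + \<eta>C + \<eta>A) * (\<Lambda>/\<mu>)" .
qed

lemma pos_all:
  assumes nz: "\<not> (i 0 = 0 \<and> c 0 = 0 \<and> a 0 = 0)" and t: "t > 0"
  shows "s t > 0 \<and> i t > 0 \<and> c t > 0 \<and> a t > 0"
proof -
  note nn = nonneg
  note d = derivs_at
  note cc = comp_cont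
  define k where "k = b1 * (1 + \<eta>C + \<eta>A) * (\<Lambda>/\<mu>) + \<mu>"
  have S: "s t > 0"
  proof -
    have "s 0 * exp (k*0) < s t * exp (k*t)"
    proof (rule exp_weight_strict[OF d(1) cc(1) _ _ t])
      fix u :: real assume u: "0 < u" "u < t"
      have "b1 * F u \<le> b1 * ((1 + \<eta>C + \<eta>A) * (\<Lambda>/\<mu>))" using F_bounds[of u] u xi_pos
        by (intro mult_left_mono) auto
      then have "(k - b1 * F u - \<mu>) * s u \<ge> 0" using nn[of u] u unfolding k_def by auto
      then show "\<Lambda> - b1 * F u * s u - \<mu> * s u + k * s u > 0" using pos by (simp add: algebra_simps)
    qed simp_all
    then have "0 < s t * exp (k*t)" using init_nonneg by simp
    then show ?thesis by (simp add: zero_less_mult_iff)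
  qed
  have Inon: "i t1 * exp (xi3*t1) \<le> i t2 * exp (xi3*t2)" if "0 \<le> t1" "t1 \<le> t2" for t1 t2
  proof (rule exp_weight_mono[OF d(2) cc(2) _ that])
    fix u assume "t1 < u" "u < t2"
    then have u: "u > 0" using that by auto
    have "b1 * F u * s u \<ge> 0" using F_bounds[of u] nn[of u] u xi_pos by simp
    moreover have "\<alpha> * a u \<ge> 0" "\<omega> * c u \<ge> 0" using nn[of u] u pos by simp_all
    ultimately show "b1 * F u * s u - xi3 * i u + \<alpha> * a u + \<omega> * c u + xi3 * i u \<ge> 0" by simp
  qed
  have Cnon: "c t1 * exp (xi2*t1) \<le> c t2 * exp (xi2*t2)" if "0 \<le> t1" "t1 \<le> t2" for t1 t2
  proof (rule exp_weight_mono[OF d(3) cc(3) _ that])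
    fix u assume "t1 < u" "u < t2"
    then show "\<phi> * i u - xi2 * c u + xi2 * c u \<ge> 0" using nn[of u] that pos by simp
  qed
  have Anon: "a t1 * exp (xi1*t1) \<le> a t2 * exp (xi1*t2)" if "0 \<le> t1" "t1 \<le> t2" for t1 t2
  proof (rule exp_weight_mono[OF d(4) cc(4) _ that])
    fix u assume "t1 < u" "u < t2"
    then show "\<rho> * i u - xi1 * a u + xi1 * a u \<ge> 0" using nn[of u] that pos by simp
  qed
  have keep: "y u > 0" if "y 0 > 0" "\<And>u. 0 \<le> u \<Longrightarrow> y 0 * exp (k'*0) \<le> y u * exp (k'*u)" "u \<ge> 0"
    for y :: "real \<Rightarrow> real" and k' u
  proof -
    have "0 < y 0 * exp (k'*0)" using that by simp
    also have "\<dots> \<le> y u * exp (k'*u)" using that by blast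
    finally show ?thesis by (simp add: zero_less_mult_iff)
  qed
  have Ipos_C: "i u > 0" if "u > 0" "\<And>v. v > 0 \<Longrightarrow> c v > 0" for u
  proof -
    have "i 0 * exp (xi3*0) < i u * exp (xi3*u)"
    proof (rule exp_weight_strict[OF d(2) cc(2) _ _ that(1)])
      fix v assume v: "0 < v" "v < u"
      have "b1 * F v * s v \<ge> 0" using F_bounds[of v] nn[of v] v xi_pos by simp
      moreover have "\<alpha> * a v \<ge> 0" "\<omega> * c v > 0" using nn[of v] v pos that(2)[of v] by simp_all
      ultimately show "b1 * F v * s v - xi3 * i v + \<alpha> * a v + \<omega> * c v + xi3 * i v > 0" by simp
    qed simp_all
    then have "0 < i u * exp (xi3*u)" using init_nonneg by simp
    then show ?thesis by (simp add: zero_less_mult_iff)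
  qed
  have Ipos_A: "i u > 0" if "u > 0" "\<And>v. v > 0 \<Longrightarrow> a v > 0" for u
  proof -
    have "i 0 * exp (xi3*0) < i u * exp (xi3*u)"
    proof (rule exp_weight_strict[OF d(2) cc(2) _ _ that(1)])
      fix v assume v: "0 < v" "v < u"
      have "b1 * F v * s v \<ge> 0" using F_bounds[of v] nn[of v] v xi_pos by simp
      moreover have "\<alpha> * a v > 0" "\<omega> * c v \<ge> 0" using nn[of v] v pos that(2)[of v] by simp_all
      ultimately show "b1 * F v * s v - xi3 * i v + \<alpha> * a v + \<omega> * c v + xi3 * i v > 0" by simp
    qed simp_all
    then have "0 < i u * exp (xi3*u)" using init_nonneg by simp
    then show ?thesis by (simp add: zero_less_mult_iff)
  qed
  have Cpos_I: "c u > 0" if "u > 0" "\<And>v. v > 0 \<Longrightarrow> i v > 0" for u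
  proof -
    have "c 0 * exp (xi2*0) < c u * exp (xi2*u)"
    proof (rule exp_weight_strict[OF d(3) cc(3) _ _ that(1)])
      fix v assume v: "0 < v" "v < u"
      show "\<phi> * i v - xi2 * c v + xi2 * c v > 0" using that(2)[of v] v pos by simp
    qed simp_all
    then have "0 < c u * exp (xi2*u)" using init_nonneg by simp
    then show ?thesis by (simp add: zero_less_mult_iff)
  qed
  have Apos_I: "a u > 0" if "u > 0" "\<And>v. v > 0 \<Longrightarrow> i v > 0" for u
  proof -
    have "a 0 * exp (xi1*0) < a u * exp (xi1*u)"
    proof (rule exp_weight_strict[OF d(4) cc(4) _ _ that(1)])
      fix v assume v: "0 < v" "v < u"
      show "\<rho> * i v - xi1 * a v + xi1 * a v > 0" using that(2)[of v] v pos by simp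
    qed simp_all
    then have "0 < a u * exp (xi1*u)" using init_nonneg by simp
    then show ?thesis by (simp add: zero_less_mult_iff)
  qed
  have Ipos: "\<And>v. v > 0 \<Longrightarrow> i v > 0"
  proof -
    consider "i 0 > 0" | "c 0 > 0" | "a 0 > 0" using nz init_nonneg by linarith
    then show "\<And>v. v > 0 \<Longrightarrow> i v > 0"
    proof cases
      case 1 then show "\<And>v. v > 0 \<Longrightarrow> i v > 0" using keep[of i xi3] Inon by force
    next
      case 2
      then have "\<And>v. v > 0 \<Longrightarrow> c v > 0" using keep[of c xi2] Cnon by force
      then show "\<And>v. v > 0 \<Longrightarrow> i v > 0" using Ipos_C by blast
    next
      case 3
      then have "\<And>v. v > 0 \<Longrightarrow> a v > 0" using keep[of a xi1] Anon by force
      then show "\<And>v. v > 0 \<Longrightarrow> i v > 0" using Ipos_A by blast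
    qed
  qed
  show ?thesis using S Ipos[OF t] Cpos_I[OF t Ipos] Apos_I[OF t Ipos] by simp
qed

end

context hiv
begin

definition "g (u::real) = u - 1 - ln u"
definition "kB = (b1*Ss*\<eta>C + \<omega>)/xi2"
definition "kA = (b1*Ss*\<eta>A + \<alpha>)/xi1"
definition "Uf S I C A = Ss*g(S/Ss) + Is*g(I/Is) + kB*(Cs*g(C/Cs)) + kA*(As*g(A/As)) + (S+I+C+A - \<Lambda>/\<mu>)^2"
definition "Wf S I C A = \<mu>*(S-Ss)^2/S + \<omega>*Cs*((C/Cs - I/Is)^2/((I/Is)*(C/Cs)))
   + \<alpha>*As*((A/As - I/Is)^2/((I/Is)*(A/As))) + 2*\<mu>*(S+I+C+A - \<Lambda>/\<mu>)^2"
definition "DUf S I C A = (1 - Ss/S)*(\<Lambda> - b1*(I + \<eta>C*C + \<eta>A*A)*S - \<mu>*S)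
   + (1 - Is/I)*(b1*(I + \<eta>C*C + \<eta>A*A)*S - xi3*I + \<alpha>*A + \<omega>*C)
   + kB*(1 - Cs/C)*(\<phi>*I - xi2*C) + kA*(1 - As/A)*(\<rho>*I - xi1*A)
   + 2*(S+I+C+A - \<Lambda>/\<mu>)*(\<Lambda> - \<mu>*(S+I+C+A))"

lemma kpos: "kB > 0" "kA > 0"
  unfolding kB_def kA_def using xi_pos eq_facts pos by (auto intro!: divide_pos_pos add_nonneg_pos)

lemma g_nonneg: "u > 0 \<Longrightarrow> g u \<ge> 0"
  unfolding g_def using ln_le_minus_one[of u] by simp

lemma g_sqrt: assumes "u > 0" shows "g u \<ge> (sqrt u - 1)^2"
proof -
  have "ln (sqrt u) \<le> sqrt u - 1" using assms by (intro ln_le_minus_one) simp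
  moreover have "ln u = 2 * ln (sqrt u)" using assms by (simp add: ln_sqrt)
  moreover have "(sqrt u)^2 = u" using assms by simp
  ultimately show ?thesis unfolding g_def by (simp add: power2_eq_square algebra_simps)
qed

lemma g_lower: assumes "u > 0" "g u \<le> k" shows "u \<ge> exp (-1 - k)"
proof -
  have "ln u \<ge> -1 - k" using assms unfolding g_def by linarith
  then have "exp (-1-k) \<le> exp (ln u)" by simp
  then show ?thesis using assms by simp
qed

lemma g_small: assumes "e > 0" shows "\<exists>\<eta>>0. \<forall>u>0. g u < \<eta> \<longrightarrow> \<bar>u - 1\<bar> < e"
proof -
  define r where "r = min 1 (e/3)"
  have r: "r > 0" "r \<le> 1" "3*r \<le> e" unfolding r_def using assms by auto
  show ?thesis
  proof (intro exI[of _ "r^2"] conjI allI impI)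
    show "r^2 > 0" using r by simp
    fix u :: real assume u: "u > 0" "g u < r^2"
    have "(sqrt u - 1)^2 < r^2" using g_sqrt[OF u(1)] u(2) by linarith
    then have "\<bar>sqrt u - 1\<bar>^2 < r^2" by (simp only: power2_abs)
    then have lt: "\<bar>sqrt u - 1\<bar> < r" using r(1) by (rule power2_less_imp_less[OF _ less_imp_le])
    have "sqrt u - 1 < 1" using lt r(2) abs_ge_self[of "sqrt u - 1"] by linarith
    then have s3: "sqrt u + 1 \<le> 3" by linarith
    have "u - 1 = (sqrt u - 1) * (sqrt u + 1)" using u by (simp add: algebra_simps)
    moreover have "\<bar>sqrt u + 1\<bar> = sqrt u + 1" using u by simp
    ultimately have "\<bar>u - 1\<bar> = \<bar>sqrt u - 1\<bar> * (sqrt u + 1)" by (metis abs_mult)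
    also have "\<dots> \<le> \<bar>sqrt u - 1\<bar> * 3" using s3 by (intro mult_left_mono) auto
    also have "\<dots> < r * 3" using lt by simp
    finally show "\<bar>u - 1\<bar> < e" using r by linarith
  qed
qed

lemma DU_le:
  assumes "S > 0" "I > 0" "C > 0" "A > 0"
  shows "DUf S I C A \<le> - Wf S I C A"
proof -
  note E = eq_facts
  have V: "(1 - Ss/S)*(\<Lambda> - b1*(I + \<eta>C*C + \<eta>A*A)*S - \<mu>*S)
   + (1 - Is/I)*(b1*(I + \<eta>C*C + \<eta>A*A)*S - xi3*I + \<alpha>*A + \<omega>*C)
   + kB*(1 - Cs/C)*(\<phi>*I - xi2*C) + kA*(1 - As/A)*(\<rho>*I - xi1*A)
     = - \<mu>*(S-Ss)^2/S - b1*Ss*Is*(1 - S/Ss)^2/(S/Ss)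
       + b1*Ss*\<eta>C*Cs*(3 - Ss/S - (S/Ss)*(C/Cs)/(I/Is) - (I/Is)/(C/Cs))
       + \<omega>*Cs*(2 - (C/Cs)/(I/Is) - (I/Is)/(C/Cs))
       + b1*Ss*\<eta>A*As*(3 - Ss/S - (S/Ss)*(A/As)/(I/Is) - (I/Is)/(A/As))
       + \<alpha>*As*(2 - (A/As)/(I/Is) - (I/Is)/(A/As))"
    unfolding kB_def kA_def
    by (rule volterra_ident[OF assms E(1-4) xi_pos(1,2) Fs_def E(5) E(6) E(7) E(8)])
  have am1: "3 - Ss/S - (S/Ss)*(C/Cs)/(I/Is) - (I/Is)/(C/Cs) \<le> 0"
    using amgm_term[of "S/Ss" "I/Is" "C/Cs"] assms E by simp
  have am2: "3 - Ss/S - (S/Ss)*(A/As)/(I/Is) - (I/Is)/(A/As) \<le> 0"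
    using amgm_term[of "S/Ss" "I/Is" "A/As"] assms E by simp
  have sq1: "2 - (C/Cs)/(I/Is) - (I/Is)/(C/Cs) = - ((C/Cs - I/Is)^2/((I/Is)*(C/Cs)))"
    using assms E by (simp add: field_simps power2_eq_square)
  have sq2: "2 - (A/As)/(I/Is) - (I/Is)/(A/As) = - ((A/As - I/Is)^2/((I/Is)*(A/As)))"
    using assms E by (simp add: field_simps power2_eq_square)
  have P: "b1*Ss*Is*(1 - S/Ss)^2/(S/Ss) \<ge> 0" using assms E xi_pos by simp
  have Q: "b1*Ss*\<eta>C*Cs \<ge> 0" "b1*Ss*\<eta>A*As \<ge> 0" using E xi_pos pos by simp_all
  have Qm: "b1*Ss*\<eta>C*Cs*(3 - Ss/S - (S/Ss)*(C/Cs)/(I/Is) - (I/Is)/(C/Cs)) \<le> 0"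
    using mult_left_mono[OF am1 Q(1)] by simp
  have Rm: "b1*Ss*\<eta>A*As*(3 - Ss/S - (S/Ss)*(A/As)/(I/Is) - (I/Is)/(A/As)) \<le> 0"
    using mult_left_mono[OF am2 Q(2)] by simp
  have N: "2*(S+I+C+A - \<Lambda>/\<mu>)*(\<Lambda> - \<mu>*(S+I+C+A)) = - (2*\<mu>*(S+I+C+A - \<Lambda>/\<mu>)^2)"
    using pos by (simp add: field_simps power2_eq_square)
  show ?thesis unfolding DUf_def Wf_def V N sq1 sq2 using P Qm Rm by simp
qed

end


context hiv
begin

lemma gder:
  assumes "(y has_real_derivative y') (at t)" "y t > 0" "X > 0" "D = (1 - X / y t) * y'"
  shows "((\<lambda>t. X * g (y t / X)) has_real_derivative D) (at t)"
proof -
  have "((\<lambda>t. X * (y t / X - 1 - ln (y t / X))) has_real_derivative X * (y' / X - 0 - (y' / X) / (y t / X))) (at t)"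
    using assms by (auto intro!: derivative_eq_intros)
  moreover have "X * (y' / X - 0 - (y' / X) / (y t / X)) = D" using assms(2,3) unfolding assms(4) by (simp add: field_simps)
  ultimately show ?thesis unfolding g_def by simp
qed

end

lemma dist_pair_le: "dist (x, y) (x', y') \<le> dist x x' + dist y y'"
  unfolding dist_Pair_Pair by (rule sqrt_sum_squares_le_sum) auto

lemma dist4: "dist ((a1::real), (a2::real), (a3::real), (a4::real)) (b1, b2, b3, b4) \<le> \<bar>a1-b1\<bar> + \<bar>a2-b2\<bar> + \<bar>a3-b3\<bar> + \<bar>a4-b4\<bar>"
proof -
  have "dist (a1, a2, a3, a4) (b1, b2, b3, b4) \<le> dist a1 b1 + dist (a2, a3, a4) (b2, b3, b4)" by (rule dist_pair_le)
  also have "dist (a2, a3, a4) (b2, b3, b4) \<le> dist a2 b2 + dist (a3, a4) (b3, b4)" by (rule dist_pair_le)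
  also have "dist (a3, a4) (b3, b4) \<le> dist a3 b3 + dist a4 b4" by (rule dist_pair_le)
  finally show ?thesis by (simp add: dist_real_def add.assoc)
qed

context hiv
begin

lemma U_terms:
  assumes "S > 0" "I > 0" "C > 0" "A > 0"
  shows "Ss*g(S/Ss) \<le> Uf S I C A" "Is*g(I/Is) \<le> Uf S I C A" "kB*(Cs*g(C/Cs)) \<le> Uf S I C A"
    "kA*(As*g(A/As)) \<le> Uf S I C A" "Uf S I C A \<ge> 0"
proof -
  note E = eq_facts
  have "Ss*g(S/Ss) \<ge> 0" "Is*g(I/Is) \<ge> 0" "kB*(Cs*g(C/Cs)) \<ge> 0" "kA*(As*g(A/As)) \<ge> 0"
    using g_nonneg assms E kpos by simp_all
  moreover have "(S+I+C+A - \<Lambda>/\<mu>)^2 \<ge> 0" by simp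
  ultimately show "Ss*g(S/Ss) \<le> Uf S I C A" "Is*g(I/Is) \<le> Uf S I C A" "kB*(Cs*g(C/Cs)) \<le> Uf S I C A"
    "kA*(As*g(A/As)) \<le> Uf S I C A" "Uf S I C A \<ge> 0" unfolding Uf_def by linarith+
qed

lemma comp_small:
  assumes "X > 0" "k > 0" "e > 0"
  shows "\<exists>\<eta>>0. \<forall>Y>0. k*(X*g(Y/X)) < \<eta> \<longrightarrow> \<bar>Y - X\<bar> < e"
proof -
  obtain \<eta> where \<eta>: "\<eta> > 0" "\<forall>u>0. g u < \<eta> \<longrightarrow> \<bar>u - 1\<bar> < e/X"
    using g_small[of "e/X"] assms by auto
  show ?thesis
  proof (intro exI[of _ "k*(X*\<eta>)"] conjI allI impI)
    show "k*(X*\<eta>) > 0" using assms \<eta> by simp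
    fix Y :: real assume Y: "Y > 0" "k*(X*g(Y/X)) < k*(X*\<eta>)"
    have "g (Y/X) < \<eta>" using Y(2) assms by simp
    moreover have "Y/X > 0" using Y(1) assms by simp
    ultimately have lt: "\<bar>Y/X - 1\<bar> < e/X" using \<eta>(2) by blast
    have "Y - X = X * (Y/X - 1)" using assms by (simp add: field_simps)
    then have eq: "\<bar>Y - X\<bar> = X * \<bar>Y/X - 1\<bar>" using assms by (simp add: abs_mult)
    have "X * \<bar>Y/X - 1\<bar> < X * (e/X)" using lt assms(1) by (rule mult_strict_left_mono)
    then show "\<bar>Y - X\<bar> < e" unfolding eq using assms by simp
  qed
qed

lemma U_small:
  assumes "e > 0"
  shows "\<exists>\<eta>>0. \<forall>S I C A. S > 0 \<and> I > 0 \<and> C > 0 \<and> A > 0 \<and> Uf S I C A < \<eta> \<longrightarrow>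
            dist (S, I, C, A) (Ss, Is, Cs, As) < e"
proof -
  note E = eq_facts
  obtain h1 where h1: "h1 > 0" "\<forall>Y>0. 1*(Ss*g(Y/Ss)) < h1 \<longrightarrow> \<bar>Y - Ss\<bar> < e/4"
    using comp_small[of Ss 1 "e/4"] E assms by auto
  obtain h2 where h2: "h2 > 0" "\<forall>Y>0. 1*(Is*g(Y/Is)) < h2 \<longrightarrow> \<bar>Y - Is\<bar> < e/4"
    using comp_small[of Is 1 "e/4"] E assms by auto
  obtain h3 where h3: "h3 > 0" "\<forall>Y>0. kB*(Cs*g(Y/Cs)) < h3 \<longrightarrow> \<bar>Y - Cs\<bar> < e/4"
    using comp_small[of Cs kB "e/4"] E assms kpos by auto
  obtain h4 where h4: "h4 > 0" "\<forall>Y>0. kA*(As*g(Y/As)) < h4 \<longrightarrow> \<bar>Y - As\<bar> < e/4"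
    using comp_small[of As kA "e/4"] E assms kpos by auto
  show ?thesis
  proof (intro exI[of _ "min (min h1 h2) (min h3 h4)"] conjI allI impI)
    show "min (min h1 h2) (min h3 h4) > 0" using h1 h2 h3 h4 by simp
    fix S I C A assume H: "S > 0 \<and> I > 0 \<and> C > 0 \<and> A > 0 \<and> Uf S I C A < min (min h1 h2) (min h3 h4)"
    then have P: "S > 0" "I > 0" "C > 0" "A > 0" by auto
    note T = U_terms[OF P]
    have "\<bar>S - Ss\<bar> < e/4" using h1(2) P T H by force
    moreover have "\<bar>I - Is\<bar> < e/4" using h2(2) P T H by force
    moreover have "\<bar>C - Cs\<bar> < e/4" using h3(2) P T H by force
    moreover have "\<bar>A - As\<bar> < e/4" using h4(2) P T H by force
    ultimately show "dist (S, I, C, A) (Ss, Is, Cs, As) < e" using dist4[of S I C A Ss Is Cs As] by linarith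
  qed
qed

definition "UP p = Uf (fst p) (fst (snd p)) (fst (snd (snd p))) (snd (snd (snd p)))"

lemma UP_E: "UP (Ss, Is, Cs, As) = 0"
proof -
  have "\<Lambda>/\<mu> = Ss+Is+Cs+As" using eq_facts(9) pos(2) by (simp add: field_simps)
  then show ?thesis unfolding UP_def Uf_def g_def by simp
qed

lemma U_cont:
  assumes "\<eta> > 0"
  shows "\<exists>\<delta>>0. \<forall>S I C A. dist (S, I, C, A) (Ss, Is, Cs, As) < \<delta> \<longrightarrow>
            S > 0 \<and> I > 0 \<and> C > 0 \<and> A > 0 \<and> Uf S I C A < \<eta>"
proof -
  note E = eq_facts
  have "isCont UP (Ss, Is, Cs, As)" unfolding UP_def[abs_def] Uf_def g_def
    using E by (intro continuous_intros) auto
  then obtain d where d: "d > 0" "\<forall>p. dist p (Ss, Is, Cs, As) < d \<longrightarrow> dist (UP p) (UP (Ss, Is, Cs, As)) < \<eta>"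
    unfolding continuous_at_eps_delta using assms by blast
  show ?thesis
  proof (intro exI[of _ "min d (min (min Ss Is) (min Cs As))"] conjI allI impI)
    show "min d (min (min Ss Is) (min Cs As)) > 0" using d E by simp
    fix S I C A assume H: "dist (S, I, C, A) (Ss, Is, Cs, As) < min d (min (min Ss Is) (min Cs As))"
    have "dist S Ss \<le> dist (S, I, C, A) (Ss, Is, Cs, As)"
      using dist_fst_le[of "(S, I, C, A)" "(Ss, Is, Cs, As)"] by simp
    moreover have "dist I Is \<le> dist (S, I, C, A) (Ss, Is, Cs, As)"
      using dist_fst_le[of "(I, C, A)" "(Is, Cs, As)"] dist_snd_le[of "(S, I, C, A)" "(Ss, Is, Cs, As)"] by simp
    moreover have "dist C Cs \<le> dist (S, I, C, A) (Ss, Is, Cs, As)"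
      using dist_fst_le[of "(C, A)" "(Cs, As)"] dist_snd_le[of "(I, C, A)" "(Is, Cs, As)"]
        dist_snd_le[of "(S, I, C, A)" "(Ss, Is, Cs, As)"] by simp
    moreover have "dist A As \<le> dist (S, I, C, A) (Ss, Is, Cs, As)"
      using dist_snd_le[of "(C, A)" "(Cs, As)"] dist_snd_le[of "(I, C, A)" "(Is, Cs, As)"]
        dist_snd_le[of "(S, I, C, A)" "(Ss, Is, Cs, As)"] by simp
    ultimately have "S > 0" "I > 0" "C > 0" "A > 0" using H unfolding dist_real_def by auto
    moreover have "Uf S I C A < \<eta>"
    proof -
      have "dist (UP (S, I, C, A)) (UP (Ss, Is, Cs, As)) < \<eta>" using d(2) H by auto
      then show ?thesis using UP_E unfolding UP_def by (simp add: dist_real_def)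
    qed
    ultimately show "S > 0" "I > 0" "C > 0" "A > 0" "Uf S I C A < \<eta>" by simp_all
  qed
qed

lemma W_nonneg_terms:
  assumes "S > 0" "I > 0" "C > 0" "A > 0"
  shows "\<mu>*(S-Ss)^2/S \<ge> 0" "\<omega>*Cs*((C/Cs - I/Is)^2/((I/Is)*(C/Cs))) \<ge> 0"
    "\<alpha>*As*((A/As - I/Is)^2/((I/Is)*(A/As))) \<ge> 0" "2*\<mu>*(S+I+C+A - \<Lambda>/\<mu>)^2 \<ge> 0"
  using assms eq_facts pos by simp_all

lemma W_pos:
  assumes P: "S > 0" "I > 0" "C > 0" "A > 0" and ne: "(S, I, C, A) \<noteq> (Ss, Is, Cs, As)"
  shows "Wf S I C A > 0"
proof (rule ccontr)
  note E = eq_facts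
  assume "\<not> Wf S I C A > 0"
  then have W0: "Wf S I C A \<le> 0" by simp
  note T = W_nonneg_terms[OF P]
  have t1: "\<mu>*(S-Ss)^2/S = 0" using W0 T unfolding Wf_def by linarith
  have t2: "\<omega>*Cs*((C/Cs - I/Is)^2/((I/Is)*(C/Cs))) = 0" using W0 T unfolding Wf_def by linarith
  have t3: "\<alpha>*As*((A/As - I/Is)^2/((I/Is)*(A/As))) = 0" using W0 T unfolding Wf_def by linarith
  have t4: "2*\<mu>*(S+I+C+A - \<Lambda>/\<mu>)^2 = 0" using W0 T unfolding Wf_def by linarith
  have "S = Ss" using t1 P pos by simp
  moreover have "C/Cs = I/Is" using t2 P pos E by simp
  moreover have "A/As = I/Is" using t3 P pos E by simp
  moreover have "S+I+C+A = Ss+Is+Cs+As"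
  proof -
    have "S+I+C+A - \<Lambda>/\<mu> = 0" using t4 pos by simp
    moreover have "\<Lambda>/\<mu> = Ss+Is+Cs+As" using E(9) pos(2) by (simp add: field_simps)
    ultimately show ?thesis by simp
  qed
  ultimately have eqs: "S = Ss" "C = (I/Is)*Cs" "A = (I/Is)*As" "I = (I/Is)*Is" "S+I+C+A = Ss+Is+Cs+As"
    using P E by (simp_all add: field_simps)
  then have "(I/Is)*(Is+Cs+As) = 1*(Is+Cs+As)" by (simp add: algebra_simps)
  then have r: "I/Is = 1" using E by (subst (asm) mult_right_cancel) auto
  then show False using ne eqs by simp
qed

end

context hiv_sol
begin

definition "V t = Uf (s t) (i t) (c t) (a t)"

lemma V_deriv:
  assumes "t > 0" "s t > 0" "i t > 0" "c t > 0" "a t > 0"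
  shows "(V has_real_derivative DUf (s t) (i t) (c t) (a t)) (at t)"
proof -
  note E = eq_facts
  note d = derivs_at[OF assms(1)]
  have dS: "((\<lambda>u. Ss*g(s u/Ss)) has_real_derivative (1 - Ss/s t)*(\<Lambda> - b1*F t * s t - \<mu>* s t)) (at t)"
    by (rule gder[OF d(1)]) (use assms E in auto)
  have dI: "((\<lambda>u. Is*g(i u/Is)) has_real_derivative (1 - Is/i t)*(b1*F t * s t - xi3*i t + \<alpha>*a t + \<omega>*c t)) (at t)"
    by (rule gder[OF d(2)]) (use assms E in auto)
  have dC: "((\<lambda>u. Cs*g(c u/Cs)) has_real_derivative (1 - Cs/c t)*(\<phi>*i t - xi2*c t)) (at t)"
    by (rule gder[OF d(3)]) (use assms E in auto)
  have dA: "((\<lambda>u. As*g(a u/As)) has_real_derivative (1 - As/a t)*(\<rho>*i t - xi1*a t)) (at t)"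
    by (rule gder[OF d(4)]) (use assms E in auto)
  have dN0: "((\<lambda>u. s u + i u + c u + a u - \<Lambda>/\<mu>) has_real_derivative
      (\<Lambda> - b1*F t * s t - \<mu>* s t) + (b1*F t * s t - xi3*i t + \<alpha>*a t + \<omega>*c t)
        + (\<phi>*i t - xi2*c t) + (\<rho>*i t - xi1*a t) - 0) (at t)"
    by (intro DERIV_add DERIV_diff d DERIV_const)
  have sumeq: "(\<Lambda> - b1*F t * s t - \<mu>* s t) + (b1*F t * s t - xi3*i t + \<alpha>*a t + \<omega>*c t)
        + (\<phi>*i t - xi2*c t) + (\<rho>*i t - xi1*a t) - 0 = \<Lambda> - \<mu>*(s t + i t + c t + a t)"
    unfolding xi1_def xi2_def xi3_def by (simp add: algebra_simps)
  have dN: "((\<lambda>u. (s u + i u + c u + a u - \<Lambda>/\<mu>)^2) has_real_derivative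
      2 * ((\<Lambda> - \<mu>*(s t + i t + c t + a t)) * (s t + i t + c t + a t - \<Lambda>/\<mu>))) (at t)"
    using DERIV_power[OF dN0[unfolded sumeq], of 2] by simp
  have "(V has_real_derivative
      (1 - Ss/s t)*(\<Lambda> - b1*F t * s t - \<mu>* s t) + (1 - Is/i t)*(b1*F t * s t - xi3*i t + \<alpha>*a t + \<omega>*c t)
      + kB*((1 - Cs/c t)*(\<phi>*i t - xi2*c t)) + kA*((1 - As/a t)*(\<rho>*i t - xi1*a t))
      + 2 * ((\<Lambda> - \<mu>*(s t + i t + c t + a t)) * (s t + i t + c t + a t - \<Lambda>/\<mu>))) (at t)"
    unfolding V_def[abs_def] Uf_def
    by (intro DERIV_add DERIV_cmult dS dI dC dA dN)
  moreover have "(1 - Ss/s t)*(\<Lambda> - b1*F t * s t - \<mu>* s t) + (1 - Is/i t)*(b1*F t * s t - xi3*i t + \<alpha>*a t + \<omega>*c t)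
      + kB*((1 - Cs/c t)*(\<phi>*i t - xi2*c t)) + kA*((1 - As/a t)*(\<rho>*i t - xi1*a t))
      + 2 * ((\<Lambda> - \<mu>*(s t + i t + c t + a t)) * (s t + i t + c t + a t - \<Lambda>/\<mu>))
      = DUf (s t) (i t) (c t) (a t)"
    unfolding DUf_def F_def by (simp only: ac_simps)
  ultimately show ?thesis by simp
qed

end


context hiv_sol
begin

lemma W_nonneg: "S > 0 \<Longrightarrow> I > 0 \<Longrightarrow> C > 0 \<Longrightarrow> A > 0 \<Longrightarrow> Wf S I C A \<ge> 0"
  using W_nonneg_terms[of S I C A] unfolding Wf_def by linarith

lemma V_mono:
  assumes t: "0 \<le> t0" "t0 \<le> t" and P: "\<And>u. t0 \<le> u \<Longrightarrow> s u > 0 \<and> i u > 0 \<and> c u > 0 \<and> a u > 0"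
    and W: "\<And>u. t0 < u \<Longrightarrow> u < t \<Longrightarrow> Wf (s u) (i u) (c u) (a u) \<ge> w"
  shows "V t + w*(t - t0) \<le> V t0"
proof -
  note E = eq_facts
  have "(\<lambda>u. V u + w*u) t \<le> (\<lambda>u. V u + w*u) t0"
  proof (rule DERIV_nonpos_imp_decreasing_open[OF t(2)])
    fix u assume u: "t0 < u" "u < t"
    have p: "s u > 0" "i u > 0" "c u > 0" "a u > 0" using P[of u] u by auto
    have dV: "(V has_real_derivative DUf (s u) (i u) (c u) (a u)) (at u)"
      using V_deriv[of u] p u t by simp
    have "((\<lambda>u. V u + w*u) has_real_derivative DUf (s u) (i u) (c u) (a u) + w*1) (at u)"
      by (intro DERIV_add dV DERIV_cmult DERIV_ident)
    moreover have "DUf (s u) (i u) (c u) (a u) + w*1 \<le> 0"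
      using DU_le[OF p] W[OF u] by simp
    ultimately show "\<exists>y. ((\<lambda>u. V u + w*u) has_real_derivative y) (at u) \<and> y \<le> 0" by blast
  next
    have pp: "s u / Ss \<noteq> 0" "i u / Is \<noteq> 0" "c u / Cs \<noteq> 0" "a u / As \<noteq> 0" if "u \<in> {t0..t}" for u
      using P[of u] that E by auto
    have sub: "{t0..t} \<subseteq> {0..}" using t by auto
    note cs = comp_cont_sub[OF sub]
    have l1: "continuous_on {t0..t} (\<lambda>u. ln (s u / Ss))"
      by (rule continuous_on_ln) (intro continuous_on_divide cs continuous_on_const, use pp E in auto)
    have l2: "continuous_on {t0..t} (\<lambda>u. ln (i u / Is))"
      by (rule continuous_on_ln) (intro continuous_on_divide cs continuous_on_const, use pp E in auto)
    have l3: "continuous_on {t0..t} (\<lambda>u. ln (c u / Cs))"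
      by (rule continuous_on_ln) (intro continuous_on_divide cs continuous_on_const, use pp E in auto)
    have l4: "continuous_on {t0..t} (\<lambda>u. ln (a u / As))"
      by (rule continuous_on_ln) (intro continuous_on_divide cs continuous_on_const, use pp E in auto)
    show "continuous_on {t0..t} (\<lambda>u. V u + w*u)" unfolding V_def[abs_def] Uf_def g_def
      by (intro continuous_on_add continuous_on_mult continuous_on_diff continuous_on_divide continuous_on_power
          continuous_on_const continuous_on_id cs l1 l2 l3 l4) (use E in auto)
  qed
  then show ?thesis by (simp add: algebra_simps)
qed

lemma V_nonincr:
  assumes t: "0 \<le> t0" "t0 \<le> t" and P: "\<And>u. t0 \<le> u \<Longrightarrow> s u > 0 \<and> i u > 0 \<and> c u > 0 \<and> a u > 0"
  shows "V t \<le> V t0"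
  using V_mono[OF t P, of 0] P W_nonneg by force

lemma V_nonneg: "s t > 0 \<Longrightarrow> i t > 0 \<Longrightarrow> c t > 0 \<Longrightarrow> a t > 0 \<Longrightarrow> V t \<ge> 0"
  unfolding V_def using U_terms(5) by blast

lemma upper: "t \<ge> 0 \<Longrightarrow> s t \<le> \<Lambda>/\<mu> \<and> i t \<le> \<Lambda>/\<mu> \<and> c t \<le> \<Lambda>/\<mu> \<and> a t \<le> \<Lambda>/\<mu>"
  using N_bound[of t] nonneg[of t] by linarith

lemma lower:
  assumes t: "0 \<le> t0" "t0 \<le> t" and P: "\<And>u. t0 \<le> u \<Longrightarrow> s u > 0 \<and> i u > 0 \<and> c u > 0 \<and> a u > 0"
  shows "s t \<ge> Ss * exp (-1 - V t0 / Ss)" "i t \<ge> Is * exp (-1 - V t0 / Is)"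
    "c t \<ge> Cs * exp (-1 - V t0 / (kB*Cs))" "a t \<ge> As * exp (-1 - V t0 / (kA*As))"
proof -
  note E = eq_facts
  have p: "s t > 0" "i t > 0" "c t > 0" "a t > 0" using P[of t] t by auto
  have Vt: "V t \<le> V t0" by (rule V_nonincr[OF t P])
  note T = U_terms[OF p, folded V_def]
  have k: "kB > 0" "kA > 0" using kpos by auto
  have "Ss * g (s t / Ss) \<le> V t0" using T(1) Vt by linarith
  then have "g (s t / Ss) \<le> V t0 / Ss" using E by (simp add: field_simps)
  then have "s t / Ss \<ge> exp (-1 - V t0 / Ss)" using g_lower p E by simp
  then show "s t \<ge> Ss * exp (-1 - V t0 / Ss)" using E by (simp add: field_simps)
  have "Is * g (i t / Is) \<le> V t0" using T(2) Vt by linarith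
  then have "g (i t / Is) \<le> V t0 / Is" using E by (simp add: field_simps)
  then have "i t / Is \<ge> exp (-1 - V t0 / Is)" using g_lower p E by simp
  then show "i t \<ge> Is * exp (-1 - V t0 / Is)" using E by (simp add: field_simps)
  have "kB * (Cs * g (c t / Cs)) \<le> V t0" using T(3) Vt by linarith
  then have "g (c t / Cs) \<le> V t0 / (kB*Cs)" using E k by (simp add: field_simps)
  then have "c t / Cs \<ge> exp (-1 - V t0 / (kB*Cs))" using g_lower p E by simp
  then show "c t \<ge> Cs * exp (-1 - V t0 / (kB*Cs))" using E by (simp add: field_simps)
  have "kA * (As * g (a t / As)) \<le> V t0" using T(4) Vt by linarith
  then have "g (a t / As) \<le> V t0 / (kA*As)" using E k by (simp add: field_simps)
  then have "a t / As \<ge> exp (-1 - V t0 / (kA*As))" using g_lower p E by simp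
  then show "a t \<ge> As * exp (-1 - V t0 / (kA*As))" using E by (simp add: field_simps)
qed

lemma attract:
  assumes nz: "\<not> (i 0 = 0 \<and> c 0 = 0 \<and> a 0 = 0)"
  shows "((\<lambda>t. (s t, i t, c t, a t)) \<longlongrightarrow> (Ss, Is, Cs, As)) at_top"
proof -
  note E = eq_facts
  have P1: "\<And>u. 1 \<le> u \<Longrightarrow> s u > 0 \<and> i u > 0 \<and> c u > 0 \<and> a u > 0" using pos_all[OF nz] by auto
  define c0 where "c0 = V 1"
  have c00: "c0 \<ge> 0" unfolding c0_def using P1[of 1] V_nonneg by auto
  define lS where "lS = Ss * exp (-1 - c0 / Ss)"
  define lI where "lI = Is * exp (-1 - c0 / Is)"
  define lC where "lC = Cs * exp (-1 - c0 / (kB*Cs))"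
  define lA where "lA = As * exp (-1 - c0 / (kA*As))"
  define M where "M = \<Lambda>/\<mu>"
  define B where "B = {lS..M} \<times> {lI..M} \<times> {lC..M} \<times> {lA..M}"
  have lpos: "lS > 0" "lI > 0" "lC > 0" "lA > 0" unfolding lS_def lI_def lC_def lA_def using E by auto
  have inB: "(s t, i t, c t, a t) \<in> B" if "1 \<le> t" for t
    using lower[of 1 t] P1 upper[of t] that unfolding B_def lS_def lI_def lC_def lA_def M_def c0_def by auto
  define WP where "WP p = Wf (fst p) (fst (snd p)) (fst (snd (snd p))) (snd (snd (snd p)))" for p :: state
  have Bpos: "fst p > 0" "fst (snd p) > 0" "fst (snd (snd p)) > 0" "snd (snd (snd p)) > 0" if "p \<in> B" for p
    using that lpos unfolding B_def by (auto simp: mem_Times_iff)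
  have WPcont: "continuous_on B WP"
  proof -
    have nz1: "fst p \<noteq> 0" "fst (snd p) / Is * (fst (snd (snd p)) / Cs) \<noteq> 0"
      "fst (snd p) / Is * (snd (snd (snd p)) / As) \<noteq> 0" if "p \<in> B" for p
      using Bpos[OF that] E by auto
    show ?thesis unfolding WP_def[abs_def] Wf_def
      by (intro continuous_on_add continuous_on_mult continuous_on_diff continuous_on_divide continuous_on_power
          continuous_on_const continuous_on_fst continuous_on_snd continuous_on_id nz1) (use E in \<open>auto dest: Bpos\<close>)
  qed
  show ?thesis unfolding tendsto_iff
  proof (intro allI impI)
    fix e :: real assume e: "e > 0"
    obtain \<eta> where \<eta>: "\<eta> > 0" "\<forall>S I C A. S > 0 \<and> I > 0 \<and> C > 0 \<and> A > 0 \<and> Uf S I C A < \<eta> \<longrightarrow>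
            dist (S, I, C, A) (Ss, Is, Cs, As) < e" using U_small[OF e] by blast
    obtain d where d: "d > 0" "\<forall>S I C A. dist (S, I, C, A) (Ss, Is, Cs, As) < d \<longrightarrow>
            S > 0 \<and> I > 0 \<and> C > 0 \<and> A > 0 \<and> Uf S I C A < \<eta>" using U_cont[OF \<eta>(1)] by blast
    have "\<exists>T1\<ge>1. dist (s T1, i T1, c T1, a T1) (Ss, Is, Cs, As) < d"
    proof (rule ccontr)
      assume H: "\<not> ?thesis"
      have far: "dist (s t, i t, c t, a t) (Ss, Is, Cs, As) \<ge> d" if "1 \<le> t" for t
        using H that by force
      define K where "K = B - ball (Ss, Is, Cs, As) d"
      have Kc: "compact K" unfolding K_def B_def
        by (intro compact_diff compact_Times compact_Icc open_ball)
      have inK: "(s t, i t, c t, a t) \<in> K" if "1 \<le> t" for t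
        using inB[OF that] far[OF that] unfolding K_def by (auto simp: dist_commute)
      obtain pm where pm: "pm \<in> K" "\<forall>q\<in>K. WP pm \<le> WP q"
        using continuous_attains_inf[OF Kc _ continuous_on_subset[OF WPcont]] inK[of 1] unfolding K_def by blast
      define w where "w = WP pm"
      have pmB: "pm \<in> B" and pmne: "pm \<noteq> (Ss, Is, Cs, As)" using pm(1) d(1) unfolding K_def by auto
      have w0: "w > 0" unfolding w_def WP_def
      proof (rule W_pos)
        show "fst pm > 0" "fst (snd pm) > 0" "fst (snd (snd pm)) > 0" "snd (snd (snd pm)) > 0"
          using Bpos[OF pmB] by auto
        show "(fst pm, fst (snd pm), fst (snd (snd pm)), snd (snd (snd pm))) \<noteq> (Ss, Is, Cs, As)"
          using pmne by simp
      qed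
      have Wge: "Wf (s u) (i u) (c u) (a u) \<ge> w" if "1 < u" for u
        using pm(2) inK[of u] that unfolding w_def WP_def by auto
      define t where "t = 1 + (c0 + 1)/w"
      have t1: "1 \<le> t" unfolding t_def using c00 w0 by simp
      have "V t + w*(t - 1) \<le> V 1" by (rule V_mono[OF _ t1 P1 Wge]) auto
      moreover have "V t \<ge> 0" using P1[OF t1] V_nonneg by auto
      moreover have "w*(t - 1) = c0 + 1" unfolding t_def using w0 by simp
      ultimately show False unfolding c0_def by linarith
    qed
    then obtain T1 where T1: "T1 \<ge> 1" "dist (s T1, i T1, c T1, a T1) (Ss, Is, Cs, As) < d" by blast
    have VT1: "V T1 < \<eta>" using d(2) T1(2) unfolding V_def by blast
    show "\<forall>\<^sub>F t in at_top. dist (s t, i t, c t, a t) (Ss, Is, Cs, As) < e"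
      unfolding eventually_at_top_linorder
    proof (intro exI[of _ T1] allI impI)
      fix t assume t: "t \<ge> T1"
      have "V t \<le> V T1" by (rule V_nonincr) (use t T1 P1 in auto)
      then have "Uf (s t) (i t) (c t) (a t) < \<eta>" using VT1 unfolding V_def by simp
      then show "dist (s t, i t, c t, a t) (Ss, Is, Cs, As) < e" using \<eta>(2) P1[of t] t T1 by auto
    qed
  qed
qed

end

theorem mainTheorem1:
  fixes \<Lambda> \<mu> \<beta> \<rho> \<phi> \<alpha> \<omega> \<eta>C \<eta>A :: real
  assumes "\<Lambda> > 0" "\<mu> > 0" "\<beta> > 0" "\<rho> > 0" "\<phi> > 0" "\<alpha> > 0" "\<omega> > 0"
    and "0 < \<eta>C" "\<eta>C \<le> 1" "\<eta>A \<ge> 1"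
    and "R0t \<Lambda> \<mu> \<beta> \<rho> \<phi> \<alpha> \<omega> \<eta>C \<eta>A > 1"
  shows "globally_asymptotically_stable (hiv_field \<Lambda> \<mu> \<beta> \<rho> \<phi> \<alpha> \<omega> \<eta>C \<eta>A)
           (endemic_eq \<Lambda> \<mu> \<beta> \<rho> \<phi> \<alpha> \<omega> \<eta>C \<eta>A) (Omega \<Lambda> \<mu> - Omega0 \<Lambda> \<mu>)"
proof -
  interpret H: hiv \<Lambda> \<mu> \<beta> \<rho> \<phi> \<alpha> \<omega> \<eta>C \<eta>A
    using assms by unfold_locales auto
  have xe: "(\<lambda>t. (fst (x t), fst (snd (x t)), fst (snd (snd (x t))), snd (snd (snd (x t))))) = x"
    for x :: "real \<Rightarrow> state" by simp
  have xt: "x t = (fst (x t), fst (snd (x t)), fst (snd (snd (x t))), snd (snd (snd (x t))))"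
    for x :: "real \<Rightarrow> state" and t by simp
  have sol_intro: "hiv_sol \<Lambda> \<mu> \<beta> \<rho> \<phi> \<alpha> \<omega> \<eta>C \<eta>A
      (\<lambda>t. fst (x t)) (\<lambda>t. fst (snd (x t))) (\<lambda>t. fst (snd (snd (x t)))) (\<lambda>t. snd (snd (snd (x t))))"
    if "is_solution (hiv_field \<Lambda> \<mu> \<beta> \<rho> \<phi> \<alpha> \<omega> \<eta>C \<eta>A) x" "x 0 \<in> Omega \<Lambda> \<mu>" for x
  proof (unfold_locales)
    show "is_solution (hiv_field \<Lambda> \<mu> \<beta> \<rho> \<phi> \<alpha> \<omega> \<eta>C \<eta>A)
       (\<lambda>t. (fst (x t), fst (snd (x t)), fst (snd (snd (x t))), snd (snd (snd (x t)))))"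
      using that(1) by simp
    show "(fst (x 0), fst (snd (x 0)), fst (snd (snd (x 0))), snd (snd (snd (x 0)))) \<in> Omega \<Lambda> \<mu>"
      using that(2) by simp
  qed
  show ?thesis unfolding globally_asymptotically_stable_def H.E_eq
  proof (intro conjI allI impI)
    fix e :: real assume e: "e > 0"
    obtain \<eta> where \<eta>: "\<eta> > 0" "\<forall>S I C A. S > 0 \<and> I > 0 \<and> C > 0 \<and> A > 0 \<and> H.Uf S I C A < \<eta> \<longrightarrow>
            dist (S, I, C, A) (H.Ss, H.Is, H.Cs, H.As) < e" using H.U_small[OF e] by blast
    obtain d where d: "d > 0" "\<forall>S I C A. dist (S, I, C, A) (H.Ss, H.Is, H.Cs, H.As) < d \<longrightarrow>
            S > 0 \<and> I > 0 \<and> C > 0 \<and> A > 0 \<and> H.Uf S I C A < \<eta>" using H.U_cont[OF \<eta>(1)] by blast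
    show "\<exists>d>0. \<forall>x. is_solution (hiv_field \<Lambda> \<mu> \<beta> \<rho> \<phi> \<alpha> \<omega> \<eta>C \<eta>A) x \<and>
          x 0 \<in> Omega \<Lambda> \<mu> - Omega0 \<Lambda> \<mu> \<and> dist (x 0) (H.Ss, H.Is, H.Cs, H.As) < d \<longrightarrow>
          (\<forall>t\<ge>0. dist (x t) (H.Ss, H.Is, H.Cs, H.As) < e)"
    proof (intro exI[of _ d] conjI allI impI)
      show "d > 0" by (rule d(1))
      fix x :: "real \<Rightarrow> state" and t :: real
      assume A: "is_solution (hiv_field \<Lambda> \<mu> \<beta> \<rho> \<phi> \<alpha> \<omega> \<eta>C \<eta>A) x \<and>
          x 0 \<in> Omega \<Lambda> \<mu> - Omega0 \<Lambda> \<mu> \<and> dist (x 0) (H.Ss, H.Is, H.Cs, H.As) < d"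
        and t: "t \<ge> 0"
      interpret S: hiv_sol \<Lambda> \<mu> \<beta> \<rho> \<phi> \<alpha> \<omega> \<eta>C \<eta>A
        "\<lambda>t. fst (x t)" "\<lambda>t. fst (snd (x t))" "\<lambda>t. fst (snd (snd (x t)))" "\<lambda>t. snd (snd (snd (x t)))"
        using sol_intro A by auto
      have d0: "dist (fst (x 0), fst (snd (x 0)), fst (snd (snd (x 0))), snd (snd (snd (x 0)))) (H.Ss, H.Is, H.Cs, H.As) < d"
        using A by simp
      have P0: "fst (x 0) > 0" "fst (snd (x 0)) > 0" "fst (snd (snd (x 0))) > 0" "snd (snd (snd (x 0))) > 0"
        and U0: "H.Uf (fst (x 0)) (fst (snd (x 0))) (fst (snd (snd (x 0)))) (snd (snd (snd (x 0)))) < \<eta>"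
        using d(2) d0 by blast+
      have nz: "\<not> (fst (snd (x 0)) = 0 \<and> fst (snd (snd (x 0))) = 0 \<and> snd (snd (snd (x 0))) = 0)"
        using P0 by auto
      have P: "fst (x u) > 0 \<and> fst (snd (x u)) > 0 \<and> fst (snd (snd (x u))) > 0 \<and> snd (snd (snd (x u))) > 0"
        if "0 \<le> u" for u
      proof (cases "u = 0")
        case True then show ?thesis using P0 by simp
      next
        case False then show ?thesis using S.pos_all[OF nz] that by simp
      qed
      have "S.V t \<le> S.V 0" by (rule S.V_nonincr[OF order_refl t P]) 
      then have "H.Uf (fst (x t)) (fst (snd (x t))) (fst (snd (snd (x t)))) (snd (snd (snd (x t)))) < \<eta>"
        using U0 unfolding S.V_def by simp
      then have "dist (fst (x t), fst (snd (x t)), fst (snd (snd (x t))), snd (snd (snd (x t)))) (H.Ss, H.Is, H.Cs, H.As) < e"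
        using \<eta>(2) P[OF t] by blast
      then show "dist (x t) (H.Ss, H.Is, H.Cs, H.As) < e" by simp
    qed
  next
    fix x :: "real \<Rightarrow> state"
    assume A: "is_solution (hiv_field \<Lambda> \<mu> \<beta> \<rho> \<phi> \<alpha> \<omega> \<eta>C \<eta>A) x \<and> x 0 \<in> Omega \<Lambda> \<mu> - Omega0 \<Lambda> \<mu>"
    interpret S: hiv_sol \<Lambda> \<mu> \<beta> \<rho> \<phi> \<alpha> \<omega> \<eta>C \<eta>A
      "\<lambda>t. fst (x t)" "\<lambda>t. fst (snd (x t))" "\<lambda>t. fst (snd (snd (x t)))" "\<lambda>t. snd (snd (snd (x t)))"
      using sol_intro A by auto
    have nz: "\<not> (fst (snd (x 0)) = 0 \<and> fst (snd (snd (x 0))) = 0 \<and> snd (snd (snd (x 0))) = 0)"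
    proof
      assume z: "fst (snd (x 0)) = 0 \<and> fst (snd (snd (x 0))) = 0 \<and> snd (snd (snd (x 0))) = 0"
      have "x 0 \<in> Omega0 \<Lambda> \<mu>" using A z xt[of x 0] unfolding Omega0_def
        by (metis (mono_tags, lifting) Diff_iff case_prodI mem_Collect_eq)
      then show False using A by simp
    qed
    show "(x \<longlongrightarrow> (H.Ss, H.Is, H.Cs, H.As)) at_top" using S.attract[OF nz] xe[of x] by simp
  qed
qed

end
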